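(* Let $f,g,a,b\in\mathcal R$ with $[b,a]=2b$, and $x\in\mathbb C$. Consider $$A(\zeta)=\begin{pmatrix}-4&0\\0&4\end{pmatrix}\zeta^2+\begin{pmatrix}0&4f\\4f&0\end{pmatrix}\zeta+\begin{pmatrix}2f^2+x&-2f^2+2g-x-\tfrac43b\\2f^2-2g+x+\tfrac43b&-2f^2-x\end{pmatrix}$$ $$\quad+\Big(\big[g-\tfrac23b,f\big]\begin{pmatrix}1&-1\\-1&1\end{pmatrix}+\big(\tfrac43bf+a-\tfrac12\big)\begin{pmatrix}0&1\\1&0\end{pmatrix}\Big)\zeta^{-1}+\big(\tfrac23bf^2-\tfrac13bg+\tfrac13xb+\tfrac49b^2\big)\begin{pmatrix}1&-1\\1&-1\end{pmatrix}\zeta^{-2}.$$ Then $\partial_\zeta Z=A(\zeta)Z$ admits a unique formal solution at $\zeta=\infty$ of the form $(F,D,T)$ (with $r=3$), and for it $T_{-3}=-4\sigma_3$, $T_{-2}=0$, $T_{-1}=x\sigma_3$ and $T_0=0$; that is, $$Z_{form}(\zeta)=F(\zeta)D(\zeta)\exp\Big(\big(-\tfrac43\zeta^3+x\zeta\big)\sigma_3\Big),\qquad\sigma_3=\begin{pmatrix}1&0\\0&-1\end{pmatrix}.$$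
   Context: Standing setup: $\mathcal R$ is an associative unital division ring which is an algebra over $\mathbb C$ (complex numbers central); $[u,v]=uv-vu$. For $X\in\mathrm{Mat}_n(\mathcal R)$, $X_d$ is its diagonal part; $X$ is off-diagonal if $X_d=0$. Formal series are formal Laurent series in $\zeta^{-1}$ with matrix coefficients. Definition (formal solution of the form $(F,D,T)$). Given $A(\zeta)=\sum_{k\ge -r}A_k\zeta^{-k-1}$ with $A_k\in\mathrm{Mat}_n(\mathcal R)$, a formal solution at $\zeta=\infty$ of $\partial_\zeta\Phi=A\Phi$ of the form $(F,D,T)$ consists of: $F=\mathbb I+\sum_{k\ge1}F_k\zeta^{-k}$ with $F_k\in\mathrm{Mat}_n(\mathcal R)$ off-diagonal; $D=\mathbb I+\sum_{k\ge1}D_k\zeta^{-k}$ with $D_k\in\mathrm{Mat}_n(\mathcal R)$ diagonal; diagonal $T_{-r},\dots,T_{-1}\in\mathrm{Mat}_n(\mathbb C)$ and diagonal $T_0\in\mathrm{Mat}_n(\mathcal R)$; such that with $T'(\zeta)=\sum_{k=-r}^0T_k\zeta^{-k-1}$ one has $\partial_\zeta(FD)+FD\,T'(\zeta)=A\,F\,D$ as formal series. It is written $\Phi_{form}=FD\exp\big(\sum_{k=1}^r\frac1kT_{-k}\zeta^k+\ln(\zeta)T_0\big)$. *)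

theory Defs
  imports "HOL-Analysis.Finite_Cartesian_Product" "HOL-Library.Numeral_Type"
begin

text \<open>The division ring R is a type 'a of class division_ring; the C-algebra structure
  is a unital ring homomorphism emb from the complex numbers into the centre of 'a.\<close>

definition complex_central_algebra :: "(complex \<Rightarrow> 'a::division_ring) \<Rightarrow> bool" where
  "complex_central_algebra emb \<longleftrightarrow>
     emb 1 = 1 \<and> (\<forall>x y. emb (x + y) = emb x + emb y) \<and> (\<forall>x y. emb (x * y) = emb x * emb y)
     \<and> (\<forall>c r. emb c * r = r * emb c)"

type_synonym ('a, 'n) sqmat = "'a ^ 'n ^ 'n"

definition diag_part :: "('a::zero, 'n::finite) sqmat \<Rightarrow> ('a, 'n) sqmat" where
  "diag_part X = (\<chi> i j. if i = j then X $ i $ j else 0)"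

definition is_diag :: "('a::zero, 'n::finite) sqmat \<Rightarrow> bool" where
  "is_diag X \<longleftrightarrow> diag_part X = X"

definition off_diag :: "('a::zero, 'n::finite) sqmat \<Rightarrow> bool" where
  "off_diag X \<longleftrightarrow> diag_part X = 0"

text \<open>Formal Laurent series in \<zeta>^{-1} with matrix coefficients: s k is the coefficient of
  \<zeta>^(-k). All series used have coefficients vanishing for k below some bound, so the
  Cauchy product below is a finite sum.\<close>

definition lmult :: "(int \<Rightarrow> ('a::semiring_1, 'n::finite) sqmat) \<Rightarrow> (int \<Rightarrow> ('a, 'n) sqmat)
    \<Rightarrow> int \<Rightarrow> ('a, 'n) sqmat" where
  "lmult a b n = (\<Sum>i\<in>{i. a i ** b (n - i) \<noteq> 0}. a i ** b (n - i))"

text \<open>Derivative: d/d\<zeta> of \<zeta>^(-k) is -k \<zeta>^(-k-1).\<close>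
definition lderiv :: "(int \<Rightarrow> ('a::ring_1, 'n::finite) sqmat) \<Rightarrow> int \<Rightarrow> ('a, 'n) sqmat" where
  "lderiv a n = (\<chi> i j. of_int (- (n - 1)) * (a (n - 1) $ i $ j))"

text \<open>Acoef is the Laurent series A (Acoef j = coefficient of \<zeta>^(-j), i.e. Acoef (k+1) = A_k),
  with Acoef j = 0 for j < 1 - r.
  T' has coefficient T (j-1) at \<zeta>^(-j).\<close>

definition formal_solution ::
  "(complex \<Rightarrow> 'a::division_ring) \<Rightarrow> nat \<Rightarrow> (int \<Rightarrow> ('a, 'n::finite) sqmat)
    \<Rightarrow> (int \<Rightarrow> ('a, 'n) sqmat) \<Rightarrow> (int \<Rightarrow> ('a, 'n) sqmat) \<Rightarrow> (int \<Rightarrow> ('a, 'n) sqmat) \<Rightarrow> bool" where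
  "formal_solution emb r Acoef F D T \<longleftrightarrow>
     F 0 = mat 1 \<and> (\<forall>k<0. F k = 0) \<and> (\<forall>k\<ge>1. off_diag (F k)) \<and>
     D 0 = mat 1 \<and> (\<forall>k<0. D k = 0) \<and> (\<forall>k\<ge>1. is_diag (D k)) \<and>
     (\<forall>k. k < - int r \<or> k > 0 \<longrightarrow> T k = 0) \<and>
     (\<forall>k. - int r \<le> k \<and> k \<le> 0 \<longrightarrow> is_diag (T k)) \<and>
     (\<forall>k. - int r \<le> k \<and> k \<le> -1 \<longrightarrow> (\<forall>i j. T k $ i $ j \<in> range emb)) \<and>
     (let FD = lmult F D; T' = (\<lambda>j. T (j - 1)) in
       (\<forall>n. lderiv FD n + lmult FD T' n = lmult Acoef FD n))"

definition mat2 :: "'a::zero \<Rightarrow> 'a \<Rightarrow> 'a \<Rightarrow> 'a \<Rightarrow> ('a, 2) sqmat" where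
  "mat2 p q s t = (\<chi> i j. if i = 0 then (if j = 0 then p else q) else (if j = 0 then s else t))"

definition smul :: "'a::times \<Rightarrow> ('a, 'n::finite) sqmat \<Rightarrow> ('a, 'n) sqmat" where
  "smul c X = (\<chi> i j. c * X $ i $ j)"

definition sigma3 :: "('a::ring_1, 2) sqmat" where
  "sigma3 = mat2 1 0 0 (-1)"

end

theory Submission
  imports Defs
begin


primrec Hb :: "((int \<Rightarrow> 'b) \<Rightarrow> int \<Rightarrow> 'b) \<Rightarrow> (int \<Rightarrow> 'b) \<Rightarrow> nat \<Rightarrow> int \<Rightarrow> 'b" where
  "Hb st b 0 = b"
| "Hb st b (Suc k) = (Hb st b k)(int (Suc k) := st (Hb st b k) (int (Suc k)))"

definition rseq :: "((int \<Rightarrow> 'b) \<Rightarrow> int \<Rightarrow> 'b) \<Rightarrow> (int \<Rightarrow> 'b) \<Rightarrow> int \<Rightarrow> 'b" where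
  "rseq st b i = Hb st b (nat i) i"

lemma Hb_le0: "i \<le> 0 \<Longrightarrow> Hb st b m i = b i"
  by (induct m) auto

lemma Hb_stable: "i \<le> int m \<Longrightarrow> Hb st b (m + d) i = Hb st b m i"
  by (induct d) auto

lemma Hb_seq: "i \<le> int m \<Longrightarrow> Hb st b m i = rseq st b i"
proof (cases "i \<le> 0")
  case True then show ?thesis by (simp add: rseq_def Hb_le0)
next
  case False
  assume "i \<le> int m"
  then obtain d where "m = nat i + d" using False by (metis le_Suc_ex nat_le_iff)
  then show ?thesis using False by (simp add: rseq_def Hb_stable)
qed

lemma rseq_eq:
  assumes dep: "\<And>h h' k. k \<ge> 1 \<Longrightarrow> (\<And>j. j < k \<Longrightarrow> h j = h' j) \<Longrightarrow> st h k = st h' k"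
  shows "rseq st b i = (if i \<le> 0 then b i else st (rseq st b) i)"
proof (cases "i \<le> 0")
  case True then show ?thesis by (simp add: rseq_def Hb_le0)
next
  case False
  then have "nat i > 0" by simp
  then obtain k where k0: "nat i = Suc k" using gr0_implies_Suc by blast
  then have k: "nat i = Suc k" "i = int (Suc k)" using False by auto
  have "rseq st b i = st (Hb st b k) (int (Suc k))" using k by (simp add: rseq_def)
  also have "\<dots> = st (rseq st b) (int (Suc k))"
    by (rule dep) (auto intro: Hb_seq)
  finally show ?thesis using False k by simp
qed


lemma two_cases: "(i::2) = 0 \<or> i = 1"
proof (induct i)
  case (of_int z) then have "z = 0 \<or> z = 1" by auto
  then show ?case by auto
qed
lemma UNIV2: "(UNIV::2 set) = {0,1}" using two_cases by auto
lemma mm_entry: "((A::('a::semiring_1,2) sqmat) ** B) $ i $ j = A$i$0 * B$0$j + A$i$1 * B$1$j"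
  by (simp add: matrix_matrix_mult_def UNIV2)
lemma mat2_eta: "(M::('a::zero,2) sqmat) = mat2 (M$0$0) (M$0$1) (M$1$0) (M$1$1)"
  unfolding mat2_def vec_eq_iff
proof (intro allI)
  fix i j :: 2
  show "M $ i $ j = (\<chi> i j. if i = 0 then (if j = 0 then M$0$0 else M$0$1) else (if j = 0 then M$1$0 else M$1$1)) $ i $ j"
    using two_cases[of i] two_cases[of j] by auto
qed
lemma mat2_nth [simp]: "mat2 p q r t $ 0 $ 0 = p" "mat2 p q r t $ 0 $ 1 = q" "mat2 p q r t $ 1 $ 0 = r" "mat2 p q r t $ 1 $ 1 = t"
  by (simp_all add: mat2_def)
lemma mat2_eq_iff: "mat2 p q r t = mat2 p' q' r' t' \<longleftrightarrow> p = p' \<and> q = q' \<and> r = r' \<and> t = t'"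
  by (metis mat2_nth)
lemma mat2_mult: "mat2 p q r t ** mat2 p' q' r' t' = mat2 (p*p'+q*r') (p*q'+q*t') (r*p'+t*r') (r*q'+t*t')"
  by (subst mat2_eta) (simp add: mm_entry)
lemma mat2_add: "mat2 p q r t + mat2 p' q' r' t' = mat2 (p+p') (q+q') (r+r') (t+t')"
  by (subst mat2_eta) simp
lemma mat2_zero: "(0::('a::zero,2) sqmat) = mat2 0 0 0 0"
  by (subst mat2_eta) simp
lemma mat2_one: "(mat 1::('a::{zero,one},2) sqmat) = mat2 1 0 0 1"
  by (subst mat2_eta) (simp add: mat_def)
lemma smul_mat2: "smul c (mat2 p q r t) = mat2 (c*p) (c*q) (c*r) (c*t)"
  by (subst mat2_eta) (simp add: smul_def)



lemma lmult_fin: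
  assumes "finite S" and "\<And>i. i \<notin> S \<Longrightarrow> a i ** b (n - i) = 0"
  shows "lmult a b n = (\<Sum>i\<in>S. a i ** b (n - i))"
proof -
  have sub: "{i. a i ** b (n - i) \<noteq> 0} \<subseteq> S" using assms(2) by blast
  show ?thesis unfolding lmult_def
    by (rule sum.mono_neutral_left[OF assms(1) sub]) auto
qed

lemma lmult_fin_r:
  assumes "finite S" and "\<And>j. j \<notin> S \<Longrightarrow> b j = 0"
  shows "lmult a b n = (\<Sum>j\<in>S. a (n - j) ** b j)"
proof -
  have "lmult a b n = (\<Sum>i\<in>(\<lambda>j. n - j) ` S. a i ** b (n - i))"
  proof (rule lmult_fin)
    fix i assume "i \<notin> (\<lambda>j. n - j) ` S"
    then have "n - i \<notin> S"
    proof (intro notI)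
      assume "n - i \<in> S"
      then have "n - (n - i) \<in> (\<lambda>j. n - j) ` S" by (rule imageI)
      then show False using \<open>i \<notin> _\<close> by simp
    qed
    then show "a i ** b (n - i) = 0" using assms(2) by simp
  qed (use assms in auto)
  also have "\<dots> = (\<Sum>j\<in>S. a (n - j) ** b j)"
    by (subst sum.reindex) (auto simp: inj_on_def)
  finally show ?thesis .
qed

lemma lmult_nat:
  assumes "\<And>i. i < 0 \<Longrightarrow> a i = 0" and "\<And>i. i < 0 \<Longrightarrow> b i = 0"
  shows "lmult a b n = (\<Sum>i\<in>{0..n}. a i ** b (n - i))"
  by (rule lmult_fin) (use assms in auto)

lemma lderiv_mat2: "lderiv Y n = mat2 (of_int (-(n-1)) * Y (n-1) $0$0) (of_int (-(n-1)) * Y (n-1) $0$1)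
   (of_int (-(n-1)) * Y (n-1) $1$0) (of_int (-(n-1)) * Y (n-1) $1$1)"
  by (subst mat2_eta) (simp add: lderiv_def)



lemma num_comm0: "x * numeral n = numeral n * (x::'a::ring_1)"
  by (metis mult_of_int_commute of_int_numeral)
lemma num_comm: "NO_MATCH (numeral m) x \<Longrightarrow> x * numeral n = numeral n * (x::'a::ring_1)"
  by (rule num_comm0)
lemma num_lcomm: "NO_MATCH (numeral m) x \<Longrightarrow> x * (numeral n * y) = numeral n * (x * (y::'a::ring_1))"
  by (metis mult.assoc num_comm0)

lemma ring_ident:
  fixes \<phi> a1 a2 a3 a4 a5 a6 b1 b2 b3 b4 b5 Wk2 Uk1 Wk1 Uk Wk Ukm1 Wkm1 Ukm2 Wkm2 Ukm3 Wkm3 i0 i1 i2 :: "'a::ring_1"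
  shows "8*(4*\<phi>*Wk2 + 2*\<phi>^2*Uk1 + b1*Wk1 + (i0 + b2)*Uk + b3*Wk + b4*Ukm1 + b5*Wkm1)
   - 4*\<phi>*(8*Wk2 + 4*\<phi>*Uk1 + a1*Uk + a2*Wk + a3*Ukm1 + (i1 + a4)*Wkm1 + a5*Ukm2 + a6*Wkm2)
   - b1*(8*Wk1 + 4*\<phi>*Uk + a1*Ukm1 + a2*Wkm1 + a3*Ukm2 + (i2 + a4)*Wkm2 + a5*Ukm3 + a6*Wkm3)
  = 8*(i0*Uk) + ((8*b3 - 4*\<phi>*a2)*Wk + (8*b4 - 4*\<phi>*a3 - b1*a1)*Ukm1 + (8*b5 - 4*\<phi>*(i1+a4) - b1*a2)*Wkm1 + (-4*\<phi>*a5 - b1*a3)*Ukm2 + (-4*\<phi>*a6 - b1*(i2+a4))*Wkm2 - b1*a5*Ukm3 - b1*a6*Wkm3)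
   + (8*b2 - 4*\<phi>*a1 - 4*b1*\<phi>)*Uk"
  by (simp add: algebra_simps num_comm num_lcomm power2_eq_square)

locale sys =
  fixes \<phi> a1 a2 a3 a4 a5 a6 b1 b2 b3 b4 b5 :: "'a::division_ring" and \<sigma> \<sigma>' :: int
  assumes char0: "\<And>n::int. n \<noteq> 0 \<Longrightarrow> (of_int n::'a) \<noteq> 0"
    and cond: "8*b2 - 4*\<phi>*a1 - 4*b1*\<phi> = 0"
    and sig: "\<sigma>' \<noteq> 0"
begin

definition Off :: "(int \<Rightarrow> 'a) \<Rightarrow> (int \<Rightarrow> 'a) \<Rightarrow> int \<Rightarrow> 'a" where
  "Off U W m = 8*W(m+2) + 4*\<phi>*U(m+1) + a1*U m + a2*W m + a3*U(m-1) + (of_int(\<sigma>*(m-1)) + a4)*W(m-1) + a5*U(m-2) + a6*W(m-2)"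

definition Dg :: "(int \<Rightarrow> 'a) \<Rightarrow> (int \<Rightarrow> 'a) \<Rightarrow> int \<Rightarrow> 'a" where
  "Dg U W n = 4*\<phi>*W(n+1) + 2*\<phi>^2*U n + b1*W n + (of_int(\<sigma>'*(n-1)) + b2)*U(n-1) + b3*W(n-1) + b4*U(n-2) + b5*W(n-2)"

definition We :: "(int \<Rightarrow> 'a) \<Rightarrow> (int \<Rightarrow> 'a) \<Rightarrow> int \<Rightarrow> 'a" where
  "We U W k = 4*\<phi>*U(k-1) + a1*U(k-2) + a2*W(k-2) + a3*U(k-3) + (of_int(\<sigma>*(k-3)) + a4)*W(k-3) + a5*U(k-4) + a6*W(k-4)"

definition Rk :: "(int \<Rightarrow> 'a) \<Rightarrow> (int \<Rightarrow> 'a) \<Rightarrow> int \<Rightarrow> 'a" where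
  "Rk U W k = (8*b3 - 4*\<phi>*a2)*W k + (8*b4 - 4*\<phi>*a3 - b1*a1)*U(k-1) + (8*b5 - 4*\<phi>*(of_int(\<sigma>*(k-1))+a4) - b1*a2)*W(k-1) + (-4*\<phi>*a5 - b1*a3)*U(k-2) + (-4*\<phi>*a6 - b1*(of_int(\<sigma>*(k-2))+a4))*W(k-2) - b1*a5*U(k-3) - b1*a6*W(k-3)"

lemma Off_We: "Off U W m = 8*W(m+2) + We U W (m+2)"
proof -
  have idx: "m + 2 - 1 = m + 1" "m + 2 - 2 = m" "m + 2 - 3 = m - 1" "m + 2 - 4 = m - 2" by simp_all
  show ?thesis unfolding Off_def We_def idx by (simp add: add.assoc)
qed

lemma key: "8*Dg U W (k+1) - 4*\<phi>*Off U W k - b1*Off U W (k-1) = 8*(of_int(\<sigma>'*k)*U k) + Rk U W k"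
proof -
  have idx: "k + 1 + 1 = k + 2" "k + 1 - 1 = k" "k + 1 - 2 = k - 1" "k - 1 + 2 = k + 1" "k - 1 + 1 = k"
     "k - 1 - 1 = k - 2" "k - 1 - 2 = k - 3" by simp_all
  have "8*Dg U W (k+1) - 4*\<phi>*Off U W k - b1*Off U W (k-1) = 8*(of_int(\<sigma>'*k)*U k) + Rk U W k
     + (8*b2 - 4*\<phi>*a1 - 4*b1*\<phi>)*U k"
    unfolding Dg_def Off_def Rk_def idx by (rule ring_ident)
  then show ?thesis using cond by simp
qed

lemma eight_nz: "(8::'a) \<noteq> 0" using char0[of 8] by simp

definition solv :: "(int \<Rightarrow> 'a) \<Rightarrow> (int \<Rightarrow> 'a) \<Rightarrow> bool" where
  "solv U W \<longleftrightarrow> U 0 = 1 \<and> W 0 = 0 \<and> (\<forall>i<0. U i = 0 \<and> W i = 0) \<and> (\<forall>m. Off U W m = 0) \<and> (\<forall>n. Dg U W n = 0)"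

lemma We_cong: "(\<And>j. j < k \<Longrightarrow> U j = U' j \<and> W j = W' j) \<Longrightarrow> We U W k = We U' W' k"
  unfolding We_def by simp

lemma Rk_cong: "W k = W' k \<Longrightarrow> (\<And>j. j < k \<Longrightarrow> U j = U' j \<and> W j = W' j) \<Longrightarrow> Rk U W k = Rk U' W' k"
  unfolding Rk_def by simp

lemma solv_unique:
  assumes s1: "solv U W" and s2: "solv U' W'"
  shows "U = U' \<and> W = W'"
proof -
  have "\<forall>j\<le>int N. U j = U' j \<and> W j = W' j" for N
  proof (induct N)
    case 0 then show ?case using s1 s2 unfolding solv_def
      by (metis linorder_neqE_linordered_idom nless_le of_nat_0)
  next
    case (Suc N)
    have IH: "\<And>j. j < int N + 1 \<Longrightarrow> U j = U' j \<and> W j = W' j" using Suc by auto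
    define k where "k = int N + 1"
    have kpos: "k \<ge> 1" by (simp add: k_def)
    have "Off U W (k-2) = 0" "Off U' W' (k-2) = 0" using s1 s2 by (auto simp: solv_def)
    then have "8*W k = - We U W k" "8*W' k = - We U' W' k"
      unfolding Off_We by (simp_all add: eq_neg_iff_add_eq_0)
    moreover have "We U W k = We U' W' k" by (rule We_cong) (use IH k_def in auto)
    ultimately have Wk: "W k = W' k" using eight_nz by (metis mult_left_cancel)
    have "8*Dg U W (k+1) - 4*\<phi>*Off U W k - b1*Off U W (k-1) = 0"
      "8*Dg U' W' (k+1) - 4*\<phi>*Off U' W' k - b1*Off U' W' (k-1) = 0"
      using s1 s2 by (auto simp: solv_def)
    then have "8*(of_int(\<sigma>'*k)*U k) = - Rk U W k" "8*(of_int(\<sigma>'*k)*U' k) = - Rk U' W' k"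
      unfolding key by (simp_all add: eq_neg_iff_add_eq_0)
    moreover have "Rk U W k = Rk U' W' k" by (rule Rk_cong) (use IH k_def Wk in auto)
    ultimately have "of_int(\<sigma>'*k)*U k = of_int(\<sigma>'*k)*U' k" using eight_nz by (metis mult_left_cancel)
    moreover have "(of_int(\<sigma>'*k)::'a) \<noteq> 0" using char0 sig kpos by simp
    ultimately have Uk: "U k = U' k" by (metis mult_left_cancel)
    show ?case using IH Uk Wk k_def by (metis le_less of_nat_Suc add.commute)
  qed
  then have "U j = U' j \<and> W j = W' j" for j by (metis nat_le_iff le_refl linorder_not_le less_le_trans nat_0_iff of_nat_0_le_iff)
  then show ?thesis by auto
qed

definition stp :: "(int \<Rightarrow> 'a \<times> 'a) \<Rightarrow> int \<Rightarrow> 'a \<times> 'a" where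
  "stp h k = (let U = fst \<circ> h; W0 = snd \<circ> h; Wk = - (inverse 8 * We U W0 k);
     Uk = - (inverse (of_int (8*\<sigma>'*k)) * Rk U (W0(k := Wk)) k) in (Uk, Wk))"

definition base :: "int \<Rightarrow> 'a \<times> 'a" where
  "base i = (if i = 0 then (1, 0) else (0, 0))"

definition Us :: "int \<Rightarrow> 'a" where "Us = fst \<circ> rseq stp base"
definition Ws :: "int \<Rightarrow> 'a" where "Ws = snd \<circ> rseq stp base"

lemma stp_dep: "k \<ge> 1 \<Longrightarrow> (\<And>j. j < k \<Longrightarrow> h j = h' j) \<Longrightarrow> stp h k = stp h' k"
proof -
  assume k: "k \<ge> 1" and hh: "\<And>j. j < k \<Longrightarrow> h j = h' j"
  have 1: "We (fst \<circ> h) (snd \<circ> h) k = We (fst \<circ> h') (snd \<circ> h') k"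
    by (rule We_cong) (simp add: hh)
  have 2: "Rk (fst \<circ> h) ((snd \<circ> h)(k := w)) k = Rk (fst \<circ> h') ((snd \<circ> h')(k := w)) k" for w
    by (rule Rk_cong) (auto simp: hh)
  show ?thesis unfolding stp_def Let_def 1 2 ..
qed

lemma rs: "rseq stp base i = (if i \<le> 0 then base i else stp (rseq stp base) i)"
  by (rule rseq_eq) (rule stp_dep)

lemma Us_base: "Us 0 = 1" "Ws 0 = 0" "i < 0 \<Longrightarrow> Us i = 0" "i < 0 \<Longrightarrow> Ws i = 0"
  by (simp_all add: Us_def Ws_def rs base_def)

lemma Ws_rec: "k \<ge> 1 \<Longrightarrow> 8 * Ws k = - We Us Ws k"
proof -
  assume k: "k \<ge> 1"
  have "Ws k = - (inverse 8 * We Us Ws k)"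
    using k by (simp add: Ws_def rs[of k] stp_def Let_def Us_def)
  then show ?thesis using eight_nz by (simp add: mult.assoc[symmetric])
qed

lemma Us_rec: "k \<ge> 1 \<Longrightarrow> of_int (8*\<sigma>'*k) * Us k = - Rk Us Ws k"
proof -
  assume k: "k \<ge> 1"
  have wk: "Ws k = - (inverse 8 * We Us Ws k)"
    using k by (simp add: Ws_def rs[of k] stp_def Let_def Us_def)
  have "Us k = - (inverse (of_int (8*\<sigma>'*k)) * Rk Us (Ws(k := - (inverse 8 * We Us Ws k))) k)"
    using k by (simp add: Us_def rs[of k] stp_def Let_def Ws_def)
  also have "Ws(k := - (inverse 8 * We Us Ws k)) = Ws" using wk by auto
  finally have "Us k = - (inverse (of_int (8*\<sigma>'*k)) * Rk Us Ws k)" .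
  moreover have "8*\<sigma>'*k \<noteq> 0" using sig k by simp
  then have "(of_int (8*\<sigma>'*k)::'a) \<noteq> 0" using char0 by blast
  ultimately show ?thesis by (simp add: mult.assoc[symmetric])
qed

lemma Ws_le0: "i \<le> 0 \<Longrightarrow> Ws i = 0"
  using Us_base by (cases "i = 0") auto

lemma Off_Us: "Off Us Ws m = 0"
proof (cases "m + 2 \<ge> 1")
  case True then show ?thesis unfolding Off_We using Ws_rec[of "m+2"] by (simp add: eq_neg_iff_add_eq_0)
next
  case False then show ?thesis unfolding Off_def by (simp add: Us_base Ws_le0)
qed

lemma Rk_Us0: "k \<le> 0 \<Longrightarrow> Rk Us Ws k = 0"
  by (cases "k = 0") (simp_all add: Rk_def Us_base)

lemma Dg_Us: "Dg Us Ws n = 0"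
proof -
  define k where "k = n - 1"
  have n: "n = k + 1" by (simp add: k_def)
  have "8 * Dg Us Ws n = 8*(of_int(\<sigma>'*k)*Us k) + Rk Us Ws k"
    using key[of Us Ws k] by (simp add: n Off_Us)
  also have "\<dots> = 0"
  proof (cases "k \<ge> 1")
    case True
    have "of_int(8*\<sigma>'*k) = (8::'a) * of_int(\<sigma>'*k)" by (simp add: mult.assoc)
    then show ?thesis using Us_rec[of k] True
      by (simp add: mult.assoc[symmetric] eq_neg_iff_add_eq_0 del: of_int_mult)
  next
    case False then show ?thesis by (cases "k = 0") (simp_all add: Rk_Us0 Us_base)
  qed
  finally show ?thesis using eight_nz by simp
qed

lemma solv_Us: "solv Us Ws"
  unfolding solv_def using Us_base Off_Us Dg_Us by auto

lemma solv_ex1: "\<exists>!(U, W). solv U W"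
  using solv_Us solv_unique by auto

end



lemma dp_nth: "diag_part X $ i $ j = (if i = j then X $ i $ j else 0)"
  by (simp add: diag_part_def)

lemma dp_add: "diag_part (X + Y) = diag_part X + (diag_part Y :: ('a::ring_1,'n::finite) sqmat)"
  by (simp add: vec_eq_iff dp_nth)
lemma dp_diff: "diag_part (X - Y) = diag_part X - (diag_part Y :: ('a::ring_1,'n::finite) sqmat)"
  by (simp add: vec_eq_iff dp_nth)
lemma dp_zero: "diag_part (0::('a::ring_1,'n::finite) sqmat) = 0"
  by (simp add: vec_eq_iff dp_nth)
lemma dp_sum: "diag_part (\<Sum>i\<in>S. X i) = (\<Sum>i\<in>S. diag_part (X i) :: ('a::ring_1,'n::finite) sqmat)"
  by (induct S rule: infinite_finite_induct) (simp_all add: dp_zero dp_add)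
lemma dp_one: "diag_part (mat 1::('a::ring_1,'n::finite) sqmat) = mat 1"
  by (simp add: vec_eq_iff dp_nth mat_def)
lemma diag_one: "is_diag (mat 1::('a::ring_1,'n::finite) sqmat)"
  by (simp add: is_diag_def dp_one)

lemma dp_mult:
  fixes A B :: "('a::ring_1,'n::finite) sqmat"
  assumes "is_diag B"
  shows "diag_part (A ** B) = diag_part A ** B"
proof -
  have B0: "k \<noteq> j \<Longrightarrow> B $ k $ j = 0" for k j
    using assms unfolding is_diag_def by (metis dp_nth)
  have 1: "(\<Sum>k\<in>UNIV. A $ i $ k * B $ k $ j) = A $ i $ j * B $ j $ j" for i j
  proof -
    have "(\<Sum>k\<in>UNIV. A $ i $ k * B $ k $ j) = (\<Sum>k\<in>UNIV. if k = j then A $ i $ j * B $ j $ j else 0)"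
      by (rule sum.cong) (auto simp: B0)
    then show ?thesis by simp
  qed
  have 2: "(\<Sum>k\<in>UNIV. diag_part A $ i $ k * B $ k $ j) = A $ i $ i * B $ i $ j" for i j
  proof -
    have "(\<Sum>k\<in>UNIV. diag_part A $ i $ k * B $ k $ j) = (\<Sum>k\<in>UNIV. if k = i then A $ i $ i * B $ i $ j else 0)"
      by (rule sum.cong) (auto simp: dp_nth)
    then show ?thesis by simp
  qed
  have "diag_part (A ** B) $ i $ j = (diag_part A ** B) $ i $ j" for i j
  proof -
    have r: "(diag_part A ** B) $ i $ j = A$i$i * B$i$j"
      unfolding matrix_matrix_mult_def by (simp only: vec_lambda_beta 2)
    have l: "diag_part (A ** B) $ i $ j = (if i = j then A$i$j*B$j$j else 0)"
      unfolding dp_nth matrix_matrix_mult_def by (simp only: vec_lambda_beta 1)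
    show ?thesis unfolding r l using B0[of i j] by auto
  qed
  then show ?thesis by (simp add: vec_eq_iff)
qed

definition shape :: "(int \<Rightarrow> ('a::ring_1,'n::finite) sqmat) \<Rightarrow> (int \<Rightarrow> ('a,'n) sqmat) \<Rightarrow> bool" where
  "shape F D \<longleftrightarrow> F 0 = mat 1 \<and> (\<forall>k<0. F k = 0) \<and> (\<forall>k\<ge>1. off_diag (F k)) \<and>
     D 0 = mat 1 \<and> (\<forall>k<0. D k = 0) \<and> (\<forall>k\<ge>1. is_diag (D k))"

lemma int_split: "k \<ge> 0 \<Longrightarrow> {0..k::int} = insert k {0..<k}" by auto

lemma sum_only0:
  assumes "0 \<in> S" "finite S" "\<And>i. i \<in> S \<Longrightarrow> i \<noteq> 0 \<Longrightarrow> g i = 0"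
  shows "sum g S = g 0"
proof -
  have "sum g S = (\<Sum>i\<in>S. if i = 0 then g 0 else 0)" by (rule sum.cong) (use assms in auto)
  then show ?thesis using assms by simp
qed

lemma shape_lmult:
  assumes sh: "shape F D"
  shows "lmult F D n = (\<Sum>i\<in>{0..n}. F i ** D (n - i))"
  by (rule lmult_nat) (use sh in \<open>auto simp: shape_def\<close>)

lemma shape_D:
  fixes F D :: "int \<Rightarrow> ('a::ring_1,'n::finite) sqmat"
  assumes sh: "shape F D"
  shows "D k = diag_part (lmult F D k)"
proof -
  have Dd: "j \<ge> 0 \<Longrightarrow> is_diag (D j)" for j using sh diag_one unfolding shape_def
    by (cases "j = 0") auto
  consider "k < 0" | "k \<ge> 0" by linarith
  then show ?thesis
  proof cases
    case 1 then show ?thesis using sh by (simp add: shape_lmult shape_def dp_zero)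
  next
    case 2
    have "diag_part (lmult F D k) = (\<Sum>i\<in>{0..k}. diag_part (F i) ** D (k - i))"
      using Dd by (simp add: shape_lmult[OF sh] dp_sum dp_mult)
    also have "\<dots> = diag_part (F 0) ** D (k - 0)"
      by (rule sum_only0) (use 2 sh in \<open>auto simp: shape_def off_diag_def\<close>)
    finally show ?thesis using sh by (simp add: shape_def dp_one)
  qed
qed

lemma shape_F:
  fixes F D :: "int \<Rightarrow> ('a::ring_1,'n::finite) sqmat"
  assumes sh: "shape F D" and k: "k \<ge> 1"
  shows "F k = lmult F D k - (\<Sum>i\<in>{0..<k}. F i ** D (k - i))"
  using k sh by (simp add: shape_lmult int_split shape_def)

lemma shape_unique:
  fixes F D F' D' :: "int \<Rightarrow> ('a::ring_1,'n::finite) sqmat"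
  assumes sh: "shape F D" and sh': "shape F' D'" and eq: "lmult F D = lmult F' D'"
  shows "F = F' \<and> D = D'"
proof -
  have DD: "D = D'" using shape_D[OF sh] shape_D[OF sh'] eq by auto
  have "\<forall>k\<le>int N. F k = F' k" for N
  proof (induct N)
    case 0 
    have "F k = F' k" if "k \<le> 0" for k
    proof -
      have "k < 0 \<or> k = 0" using that by auto
      then show ?thesis using sh sh' unfolding shape_def by auto
    qed
    then show ?case by simp
  next
    case (Suc N)
    have "F (int N + 1) = F' (int N + 1)"
      using shape_F[OF sh, of "int N + 1"] shape_F[OF sh', of "int N + 1"] Suc eq DD
      by simp
    moreover have "k \<le> int (Suc N) \<Longrightarrow> k \<le> int N \<or> k = int N + 1" for k by auto
    ultimately show ?case using Suc by blast
  qed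
  then have "F k = F' k" for k
  proof -
    assume "\<And>N. \<forall>k\<le>int N. F k = F' k"
    moreover have "k \<le> int (nat k)" by simp
    ultimately show ?thesis by blast
  qed
  then show ?thesis using DD by auto
qed

lemma FD_exists:
  fixes Y :: "int \<Rightarrow> ('a::ring_1,'n::finite) sqmat"
  assumes Y0: "Y 0 = mat 1" and Yn: "\<And>k. k < 0 \<Longrightarrow> Y k = 0"
  shows "\<exists>F D. shape F D \<and> lmult F D = Y"
proof -
  define D where "D k = diag_part (Y k)" for k
  define st where "st h k = Y k - (\<Sum>i\<in>{0..<k}. h i ** D (k - i))" for h and k :: int
  define b :: "int \<Rightarrow> ('a,'n) sqmat" where "b i = (if i = 0 then mat 1 else 0)" for i
  define F where "F = rseq st b"
  have dep: "st h k = st h' k" if "k \<ge> 1" "\<And>j. j < k \<Longrightarrow> h j = h' j" for h h' k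
  proof -
    have "(\<Sum>i\<in>{0..<k}. h i ** D (k - i)) = (\<Sum>i\<in>{0..<k}. h' i ** D (k - i))"
      by (rule sum.cong) (auto simp: that)
    then show ?thesis unfolding st_def by simp
  qed
  have F: "F i = (if i \<le> 0 then b i else st F i)" for i
    unfolding F_def by (rule rseq_eq) (rule dep)
  have F0: "F 0 = mat 1" and Fn: "k < 0 \<Longrightarrow> F k = 0" for k using F[of 0] F[of k] by (auto simp: b_def)
  have D0: "D 0 = mat 1" using Y0 by (simp add: D_def dp_one)
  have Dn: "k < 0 \<Longrightarrow> D k = 0" for k using Yn by (simp add: D_def dp_zero)
  have Dd: "is_diag (D k)" for k by (simp add: D_def is_diag_def diag_part_def vec_eq_iff)
  have Fk: "k \<ge> 1 \<Longrightarrow> F k = Y k - (\<Sum>i\<in>{0..<k}. F i ** D (k - i))" for k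
    using F[of k] by (simp add: st_def)
  have off: "diag_part (F (int m)) = 0" if "m \<ge> 1" for m
    using that
  proof (induct m rule: less_induct)
    case (less m)
    have "diag_part (F (int m)) = diag_part (Y (int m)) - (\<Sum>i\<in>{0..<int m}. diag_part (F i ** D (int m - i)))"
      using Fk[of "int m"] less.prems by (simp add: dp_diff dp_sum)
    also have "(\<Sum>i\<in>{0..<int m}. diag_part (F i ** D (int m - i))) = (\<Sum>i\<in>{0..<int m}. diag_part (F i) ** D (int m - i))"
      by (rule sum.cong[OF refl]) (rule dp_mult[OF Dd])
    also have "diag_part (Y (int m)) = D (int m)" by (simp add: D_def)
    finally have "diag_part (F (int m)) = D (int m) - (\<Sum>i\<in>{0..<int m}. diag_part (F i) ** D (int m - i))" .
    also have "(\<Sum>i\<in>{0..<int m}. diag_part (F i) ** D (int m - i)) = diag_part (F 0) ** D (int m - 0)"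
    proof (rule sum_only0)
      fix i assume i: "i \<in> {0..<int m}" "i \<noteq> 0"
      define j where "j = nat i"
      have j: "i = int j" "j \<ge> 1" "j < m" using i by (auto simp: j_def)
      then show "diag_part (F i) ** D (int m - i) = 0" using less.hyps[of j] by simp
    qed (use less.prems in auto)
    finally show ?case using F0 by (simp add: dp_one)
  qed
  have sh: "shape F D"
  proof -
    have "diag_part (F k) = 0" if "k \<ge> 1" for k
    proof -
      have "k = int (nat k)" "nat k \<ge> 1" using that by auto
      then show ?thesis using off[of "nat k"] by simp
    qed
    then show ?thesis unfolding shape_def off_diag_def using F0 Fn D0 Dn Dd by auto
  qed
  have "lmult F D k = Y k" for k
  proof -
    consider "k < 0" | "k = 0" | "k \<ge> 1" by linarith
    then show ?thesis
    proof cases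
      case 1 then show ?thesis using Yn by (simp add: shape_lmult[OF sh])
    next
      case 2 then show ?thesis using F0 D0 Y0 by (simp add: shape_lmult[OF sh])
    next
      case 3 then show ?thesis using shape_F[OF sh 3] Fk[OF 3] by simp
    qed
  qed
  then show ?thesis using sh by blast
qed



lemma emb_facts:
  fixes emb :: "complex \<Rightarrow> 'a::division_ring"
  assumes alg: "complex_central_algebra emb"
  shows emb_add: "emb (u + v) = emb u + emb v" and emb_mult: "emb (u * v) = emb u * emb v"
    and emb_one: "emb 1 = 1" and emb_central: "emb u * r = r * emb u"
  using alg unfolding complex_central_algebra_def by blast+

lemma emb_zero: assumes "complex_central_algebra emb" shows "emb 0 = 0"
  using emb_add[OF assms, of 0 0] by simp

lemma emb_uminus: assumes "complex_central_algebra emb" shows "emb (- u) = - emb u"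
proof -
  have "emb u + emb (-u) = 0" using emb_add[OF assms, of u "-u"] emb_zero[OF assms] by simp
  then have "- emb u = emb (-u)" by (rule add.inverse_unique)
  then show ?thesis by simp
qed

lemma emb_diff: assumes "complex_central_algebra emb" shows "emb (u - v) = emb u - emb v"
  using emb_add[OF assms, of u "-v"] emb_uminus[OF assms] by simp

lemma emb_of_nat: assumes "complex_central_algebra emb" shows "emb (of_nat n) = of_nat n"
  by (induct n) (simp_all add: emb_zero[OF assms] emb_add[OF assms] emb_one[OF assms])

lemma emb_of_int: assumes "complex_central_algebra emb" shows "emb (of_int n) = of_int n"
proof (cases "0 \<le> n")
  case True
  then have "n = int (nat n)" by simp
  then show ?thesis using emb_of_nat[OF assms, of "nat n"] by (metis of_int_of_nat_eq)
next
  case False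
  then have "n = - int (nat (- n))" by simp
  then show ?thesis using emb_of_nat[OF assms, of "nat (-n)"] emb_uminus[OF assms, of "of_nat (nat (-n))"]
    by (metis of_int_of_nat_eq of_int_minus)
qed

lemma emb_numeral: assumes "complex_central_algebra emb" shows "emb (numeral n) = numeral n"
  using emb_of_nat[OF assms, of "numeral n"] by simp

lemma emb_nz: assumes "complex_central_algebra emb" and "u \<noteq> 0" shows "emb u \<noteq> 0"
proof
  assume "emb u = 0"
  then have "emb (u * inverse u) = 0" by (simp add: emb_mult[OF assms(1)])
  then show False using assms by (simp add: emb_one[OF assms(1)])
qed

lemma emb_char0: fixes emb :: "complex \<Rightarrow> 'a::division_ring"
  assumes "complex_central_algebra emb" and "n \<noteq> 0"
  shows "(of_int n::'a::division_ring) \<noteq> 0"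
  using emb_nz[OF assms(1), of "of_int n"] assms emb_of_int[OF assms(1), of n] by simp



locale conc =
  fixes emb :: "complex \<Rightarrow> 'a::division_ring" and f g a b :: 'a and x :: complex
  assumes alg: "complex_central_algebra emb"
begin

definition "xx = emb x"
definition "p = - 2 * f^2 + 2 * g - emb x - emb (4/3) * b"
definition "c = (g - emb (2/3) * b) * f - f * (g - emb (2/3) * b)"
definition "e = emb (4/3) * b * f + a - emb (1/2)"
definition "s = emb (2/3) * b * f^2 - emb (1/3) * b * g + emb (1/3) * emb x * b + emb (4/9) * b^2"

definition AA :: "int \<Rightarrow> ('a, 2) sqmat" where
  "AA = (\<lambda>j::int.
      if j = -2 then mat2 (-4) 0 0 4
      else if j = -1 then mat2 0 (4 * f) (4 * f) 0
      else if j = 0 then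
        mat2 (2 * f^2 + emb x) (- 2 * f^2 + 2 * g - emb x - emb (4/3) * b)
             (2 * f^2 - 2 * g + emb x + emb (4/3) * b) (- 2 * f^2 - emb x)
      else if j = 1 then
        smul ((g - emb (2/3) * b) * f - f * (g - emb (2/3) * b)) (mat2 1 (-1) (-1) 1)
        + smul (emb (4/3) * b * f + a - emb (1/2)) (mat2 0 1 1 0)
      else if j = 2 then
        smul (emb (2/3) * b * f^2 - emb (1/3) * b * g + emb (1/3) * emb x * b + emb (4/9) * b^2)
             (mat2 1 (-1) 1 (-1))
      else 0)"

lemma emb_comm: "NO_MATCH (emb w) r \<Longrightarrow> NO_MATCH (numeral m) r \<Longrightarrow> r * emb z = emb z * r"
  by (simp add: emb_central[OF alg])
lemma emb_lcomm: "NO_MATCH (emb w) r \<Longrightarrow> NO_MATCH (numeral m) r \<Longrightarrow> r * (emb z * q) = emb z * (r * q)"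
  by (metis emb_central[OF alg] mult.assoc)

lemma xx_central: "xx * r = r * xx"
  unfolding xx_def by (rule emb_central[OF alg])

lemma AA_vals:
  "AA (-2) = mat2 (-4) 0 0 4" "AA (-1) = mat2 0 (4*f) (4*f) 0"
  "AA 0 = mat2 (2*f^2 + xx) p (-p) (-(2*f^2) - xx)"
  "AA 1 = mat2 c (e - c) (e - c) c" "AA 2 = mat2 s (-s) s (-s)"
  "j \<notin> {-2,-1,0,1,2} \<Longrightarrow> AA j = 0"
  by (auto simp: AA_def xx_def p_def c_def e_def s_def smul_mat2 mat2_add mat2_eq_iff algebra_simps)

lemma pf: "p * f - f * p = 2 * c"
proof -
  have e43: "emb (4/3) = 2 * emb (2/3)"
    using emb_mult[OF alg, of 2 "2/3"] emb_numeral[OF alg, of "num.Bit0 num.One"] by simp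
  have ff: "f^2 * f = f * f^2" by (simp add: power_commutes)
  have "p * f - f * p = 2 * (g * f - f * g) - emb (4/3) * (b * f - f * b)"
    unfolding p_def using emb_central[OF alg, of x f] emb_central[OF alg, of "4/3" f] ff
    by (simp add: algebra_simps num_comm num_lcomm emb_comm emb_lcomm)
  also have "\<dots> = 2 * c" unfolding c_def e43
    using emb_central[OF alg, of "2/3" f]
    by (simp add: algebra_simps num_comm num_lcomm emb_comm emb_lcomm)
  finally show ?thesis .
qed

sublocale uw: sys f "-p" "-(2*f^2 + 2*xx)" "e - c" c s "-s" p c "e - c" s "-s" 1 1
proof
  show "\<And>n::int. n \<noteq> 0 \<Longrightarrow> (of_int n::'a) \<noteq> 0" by (rule emb_char0[OF alg])
  show "8 * c - 4 * f * - p - 4 * p * f = 0" using pf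
    by (simp add: algebra_simps num_comm num_lcomm)
qed simp


sublocale vz: sys "-f" "-p" "-(2*f^2 + 2*xx)" "-(e - c)" "-c" s "-s" p "-c" "-(e - c)" s "-s" "-1" "-1"
proof
  show "\<And>n::int. n \<noteq> 0 \<Longrightarrow> (of_int n::'a) \<noteq> 0" by (rule emb_char0[OF alg])
  have "4 * (p * f - f * p) = 8 * c" using pf by (simp add: algebra_simps num_comm num_lcomm)
  then show "8 * - c - 4 * - f * - p - 4 * p * - f = 0"
    by (simp add: algebra_simps num_comm num_lcomm)
qed simp

lemma xx_comm: "NO_MATCH xx r \<Longrightarrow> NO_MATCH (numeral m) r \<Longrightarrow> r * xx = xx * r"
  by (simp add: xx_central)

lemma dbl1: "r + r = 2 * (r::'b::ring_1)" by (simp add: mult_2)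
lemma dbl2: "r + (r + q) = 2 * r + (q::'b::ring_1)" by (simp add: mult_2 add.assoc)

lemma lmult_T:
  fixes T :: "int \<Rightarrow> ('a,2) sqmat"
  assumes Tz: "\<And>k. k < -3 \<or> k > 0 \<Longrightarrow> T k = 0"
  shows "lmult Y (\<lambda>j. T (j - 1)) n = Y (n+2) ** T (-3) + Y (n+1) ** T (-2) + Y n ** T (-1) + Y (n-1) ** T 0"
proof -
  have "lmult Y (\<lambda>j. T (j - 1)) n = (\<Sum>j\<in>{-2,-1,0,1}. Y (n - j) ** T (j - 1))"
    by (rule lmult_fin_r) (auto intro: Tz)
  then show ?thesis by (simp add: add.assoc)
qed

lemma lmult_AA:
  "lmult AA Y n = AA (-2) ** Y (n+2) + AA (-1) ** Y (n+1) + AA 0 ** Y n + AA 1 ** Y (n-1) + AA 2 ** Y (n-2)"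
proof -
  have "lmult AA Y n = (\<Sum>i\<in>{-2,-1,0,1,2}. AA i ** Y (n - i))"
    by (rule lmult_fin) (auto simp: AA_vals(6))
  then show ?thesis by (simp add: add.assoc)
qed

lemma lderiv_nth: "lderiv Y n $ i $ j = of_int (-(n-1)) * Y (n-1) $ i $ j"
  by (simp add: lderiv_def)

lemma E_iff:
  fixes Y T :: "int \<Rightarrow> ('a,2) sqmat"
  assumes T3: "T (-3) = mat2 (-4) 0 0 4" and T2: "T (-2) = mat2 \<rho>1 0 0 \<rho>2"
    and T1: "T (-1) = mat2 (xx + \<theta>1) 0 0 (-xx + \<theta>2)" and T0: "T 0 = mat2 \<tau>1 0 0 \<tau>2"
    and Tz: "\<And>k. k < -3 \<or> k > 0 \<Longrightarrow> T k = 0"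
  shows "(lderiv Y n + lmult Y (\<lambda>j. T (j - 1)) n = lmult AA Y n) \<longleftrightarrow>
   (uw.Off (\<lambda>k. Y k $0$0) (\<lambda>k. Y k $1$0) n = Y (n+1) $1$0 * \<rho>1 + Y n $1$0 * \<theta>1 + Y (n-1) $1$0 * \<tau>1 \<and>
    uw.Dg (\<lambda>k. Y k $0$0) (\<lambda>k. Y k $1$0) n = Y (n+1) $0$0 * \<rho>1 + Y n $0$0 * \<theta>1 + Y (n-1) $0$0 * \<tau>1 \<and>
    vz.Off (\<lambda>k. Y k $1$1) (\<lambda>k. Y k $0$1) n = - (Y (n+1) $0$1 * \<rho>2 + Y n $0$1 * \<theta>2 + Y (n-1) $0$1 * \<tau>2) \<and>
    vz.Dg (\<lambda>k. Y k $1$1) (\<lambda>k. Y k $0$1) n = - (Y (n+1) $1$1 * \<rho>2 + Y n $1$1 * \<theta>2 + Y (n-1) $1$1 * \<tau>2))"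
  (is "?L = ?R \<longleftrightarrow> ?C")
proof -
  have LR: "?L = ?R \<longleftrightarrow> ?R $0$0 - ?L $0$0 = 0 \<and> ?L $0$1 - ?R $0$1 = 0 \<and> ?R $1$0 - ?L $1$0 = 0 \<and> ?L $1$1 - ?R $1$1 = 0"
    by (subst (1 2) mat2_eta) (auto simp: mat2_eq_iff)
  have LT: "lmult Y (\<lambda>j. T (j - 1)) n = Y (n+2) ** T (-3) + Y (n+1) ** T (-2) + Y n ** T (-1) + Y (n-1) ** T 0"
    by (rule lmult_T, rule Tz, assumption)
  note defs = LT lmult_AA T3 T2 T1 T0 AA_vals mm_entry vector_add_component lderiv_nth
  have e00: "?R $0$0 - ?L $0$0 = uw.Dg (\<lambda>k. Y k $0$0) (\<lambda>k. Y k $1$0) n - (Y (n+1) $0$0 * \<rho>1 + Y n $0$0 * \<theta>1 + Y (n-1) $0$0 * \<tau>1)"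
    unfolding defs uw.Dg_def by (simp add: algebra_simps num_comm num_lcomm xx_comm dbl1 dbl2)
  have e10: "?R $1$0 - ?L $1$0 = uw.Off (\<lambda>k. Y k $0$0) (\<lambda>k. Y k $1$0) n - (Y (n+1) $1$0 * \<rho>1 + Y n $1$0 * \<theta>1 + Y (n-1) $1$0 * \<tau>1)"
    unfolding defs uw.Off_def by (simp add: algebra_simps num_comm num_lcomm xx_comm dbl1 dbl2)
  have e01: "?L $0$1 - ?R $0$1 = vz.Off (\<lambda>k. Y k $1$1) (\<lambda>k. Y k $0$1) n + (Y (n+1) $0$1 * \<rho>2 + Y n $0$1 * \<theta>2 + Y (n-1) $0$1 * \<tau>2)"
    unfolding defs vz.Off_def by (simp add: algebra_simps num_comm num_lcomm xx_comm dbl1 dbl2)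
  have e11: "?L $1$1 - ?R $1$1 = vz.Dg (\<lambda>k. Y k $1$1) (\<lambda>k. Y k $0$1) n + (Y (n+1) $1$1 * \<rho>2 + Y n $1$1 * \<theta>2 + Y (n-1) $1$1 * \<tau>2)"
    unfolding defs vz.Dg_def by (simp add: algebra_simps num_comm num_lcomm xx_comm dbl1 dbl2)
  show ?thesis
    by (simp only: LR e00 e10 e01 e11 right_minus_eq eq_neg_iff_add_eq_0) blast
qed


definition Tst :: "int \<Rightarrow> ('a,2) sqmat" where
  "Tst k = (if k = -3 then mat2 (-4) 0 0 4 else if k = -1 then mat2 xx 0 0 (-xx) else 0)"

definition Yst :: "int \<Rightarrow> ('a,2) sqmat" where
  "Yst k = mat2 (uw.Us k) (vz.Ws k) (uw.Ws k) (vz.Us k)"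

lemma diag2: "is_diag (M::('a,2) sqmat) \<Longrightarrow> M = mat2 (M$0$0) 0 0 (M$1$1)"
  unfolding is_diag_def by (subst (asm) mat2_eta) (metis dp_nth mat2_nth zero_neq_one)

lemma Y_basic:
  assumes sh: "shape F D"
  shows "lmult F D 0 = mat 1" "k < 0 \<Longrightarrow> lmult F D k = 0"
  using sh by (simp_all add: shape_lmult shape_def)

lemma sol_imp:
  assumes fs: "formal_solution emb 3 AA F D T"
  shows "T = Tst \<and> lmult F D = Yst"
proof -
  define Y where "Y = lmult F D"
  have sh: "shape F D" using fs unfolding formal_solution_def shape_def by auto
  have Y0: "Y 0 = mat2 1 0 0 1" using Y_basic[OF sh] by (simp add: Y_def mat2_one)
  have Yn: "k < 0 \<Longrightarrow> Y k = 0" for k using Y_basic[OF sh] by (simp add: Y_def)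
  have Tz: "\<And>k. k < -3 \<or> k > 0 \<Longrightarrow> T k = 0" using fs unfolding formal_solution_def by auto
  have Td: "-3 \<le> k \<Longrightarrow> k \<le> 0 \<Longrightarrow> T k = mat2 (T k$0$0) 0 0 (T k$1$1)" for k
    using fs unfolding formal_solution_def by (intro diag2) auto
  have E: "\<And>n. lderiv Y n + lmult Y (\<lambda>j. T (j - 1)) n = lmult AA Y n"
    using fs unfolding formal_solution_def Let_def Y_def by auto
  have LTn: "lmult Y (\<lambda>j. T (j - 1)) n = Y (n+2) ** T (-3) + Y (n+1) ** T (-2) + Y n ** T (-1) + Y (n-1) ** T 0" for n
    by (rule lmult_T, rule Tz, assumption)
  have ld: "lderiv Y (-2) = 0"
    using Yn[of "-3"] by (simp add: lderiv_def vec_eq_iff)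
  have T3: "T (-3) = mat2 (-4) 0 0 4"
    using E[of "-2"] unfolding LTn lmult_AA ld using Y0 Yn[of "-1"] Yn[of "-2"] Yn[of "-3"] Yn[of "-4"]
    by (simp add: mat2_one[symmetric] AA_vals)
  define \<rho>1 \<rho>2 \<theta>1 \<theta>2 \<tau>1 \<tau>2 where "\<rho>1 = T (-2) $0$0" "\<rho>2 = T (-2) $1$1"
    "\<theta>1 = T (-1) $0$0 - xx" "\<theta>2 = T (-1) $1$1 + xx" "\<tau>1 = T 0 $0$0" "\<tau>2 = T 0 $1$1"
  have T2: "T (-2) = mat2 \<rho>1 0 0 \<rho>2" using Td[of "-2"] by (simp add: \<rho>1_\<rho>2_\<theta>1_\<theta>2_\<tau>1_\<tau>2_def)
  have T1: "T (-1) = mat2 (xx + \<theta>1) 0 0 (-xx + \<theta>2)" using Td[of "-1"] by (simp add: \<rho>1_\<rho>2_\<theta>1_\<theta>2_\<tau>1_\<tau>2_def)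
  have T0: "T 0 = mat2 \<tau>1 0 0 \<tau>2" using Td[of 0] by (simp add: \<rho>1_\<rho>2_\<theta>1_\<theta>2_\<tau>1_\<tau>2_def)
  define u v w z where "u = (\<lambda>k. Y k $0$0)" "v = (\<lambda>k. Y k $0$1)" "w = (\<lambda>k. Y k $1$0)" "z = (\<lambda>k. Y k $1$1)"
  note EE = E_iff[OF T3 T2 T1 T0 Tz, of Y, unfolded u_v_w_z_def[symmetric]]
  have eq: "uw.Off u w n = w (n+1) * \<rho>1 + w n * \<theta>1 + w (n-1) * \<tau>1"
    "uw.Dg u w n = u (n+1) * \<rho>1 + u n * \<theta>1 + u (n-1) * \<tau>1"
    "vz.Off z v n = - (v (n+1) * \<rho>2 + v n * \<theta>2 + v (n-1) * \<tau>2)"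
    "vz.Dg z v n = - (z (n+1) * \<rho>2 + z n * \<theta>2 + z (n-1) * \<tau>2)" for n
    using EE[of n] E[of n] by (auto simp: u_v_w_z_def)
  have b0: "u 0 = 1" "v 0 = 0" "w 0 = 0" "z 0 = 1" using Y0 by (simp_all add: u_v_w_z_def)
  have bn: "k < 0 \<Longrightarrow> u k = 0" "k < 0 \<Longrightarrow> v k = 0" "k < 0 \<Longrightarrow> w k = 0" "k < 0 \<Longrightarrow> z k = 0" for k
    using Yn[of k] by (simp_all add: u_v_w_z_def)
  note bs = b0 bn
  have "uw.Dg u w (-1) = 0" "vz.Dg z v (-1) = 0" unfolding uw.Dg_def vz.Dg_def by (simp_all add: bs)
  then have r1: "\<rho>1 = 0" and r2: "\<rho>2 = 0" using eq(2)[of "-1"] eq(4)[of "-1"] by (simp_all add: bs)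
  have Rk1: "uw.Rk u w (-1) = 0" "vz.Rk z v (-1) = 0" unfolding uw.Rk_def vz.Rk_def by (simp_all add: bs)
  have "8 * uw.Dg u w 0 = 0"
    using uw.key[of u w "-1"] eq(1)[of "-1"] eq(1)[of "-2"] Rk1 by (simp add: r1 bs)
  then have "uw.Dg u w 0 = 0" using uw.eight_nz by simp
  then have t1: "\<theta>1 = 0" using eq(2)[of 0] by (simp add: r1 bs)
  have "8 * vz.Dg z v 0 = 0"
    using vz.key[of z v "-1"] eq(3)[of "-1"] eq(3)[of "-2"] Rk1 by (simp add: r2 bs)
  then have "vz.Dg z v 0 = 0" using vz.eight_nz by simp
  then have t2: "\<theta>2 = 0" using eq(4)[of 0] by (simp add: r2 bs)
  have Rk0: "uw.Rk u w 0 = 0" "vz.Rk z v 0 = 0" unfolding uw.Rk_def vz.Rk_def by (simp_all add: bs)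
  have "8 * uw.Dg u w 1 = 0"
    using uw.key[of u w 0] eq(1)[of 0] eq(1)[of "-1"] Rk0 by (simp add: r1 t1 bs)
  then have "uw.Dg u w 1 = 0" using uw.eight_nz by simp
  then have s1: "\<tau>1 = 0" using eq(2)[of 1] by (simp add: r1 t1 bs)
  have "8 * vz.Dg z v 1 = 0"
    using vz.key[of z v 0] eq(3)[of 0] eq(3)[of "-1"] Rk0 by (simp add: r2 t2 bs)
  then have "vz.Dg z v 1 = 0" using vz.eight_nz by simp
  then have s2: "\<tau>2 = 0" using eq(4)[of 1] by (simp add: r2 t2 bs)
  have TT: "T = Tst"
  proof
    fix k :: int
    consider "k < -3 \<or> k > 0" | "k = -3" | "k = -2" | "k = -1" | "k = 0" by linarith
    then show "T k = Tst k"
    proof cases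
      case 1
      then have "T k = 0" by (rule Tz)
      moreover have "Tst k = 0" using 1 by (auto simp: Tst_def)
      ultimately show ?thesis by simp
    qed (simp_all add: Tst_def T3 T2 T1 T0 r1 r2 t1 t2 s1 s2 mat2_zero)
  qed
  have "uw.solv u w" unfolding uw.solv_def using eq(1,2) bs by (simp add: r1 t1 s1)
  then have uw: "u = uw.Us \<and> w = uw.Ws" using uw.solv_unique uw.solv_Us by blast
  have "vz.solv z v" unfolding vz.solv_def using eq(3,4) bs by (simp add: r2 t2 s2)
  then have vz: "z = vz.Us \<and> v = vz.Ws" using vz.solv_unique vz.solv_Us by blast
  have "Y = Yst"
  proof
    fix k :: int
    have U1: "u = uw.Us" and W1: "w = uw.Ws" using uw by auto
    have U2: "z = vz.Us" and W2: "v = vz.Ws" using vz by auto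
    have "Y k = mat2 (u k) (v k) (w k) (z k)" unfolding u_v_w_z_def by (rule mat2_eta)
    also have "\<dots> = Yst k" unfolding Yst_def U1 W1 U2 W2 ..
    finally show "Y k = Yst k" .
  qed
  then show ?thesis using TT Y_def by simp
qed


lemma diag_mat2: "is_diag (mat2 r1 0 0 (r2::'a))"
  unfolding is_diag_def vec_eq_iff dp_nth
proof (intro allI)
  fix i j :: 2
  show "(if i = j then mat2 r1 0 0 r2 $ i $ j else 0) = mat2 r1 0 0 r2 $ i $ j"
    using two_cases[of i] two_cases[of j] by auto
qed

lemma range_mat2: "r1 \<in> range emb \<Longrightarrow> r2 \<in> range emb \<Longrightarrow> mat2 r1 0 0 r2 $ i $ j \<in> range emb"
proof -
  assume "r1 \<in> range emb" "r2 \<in> range emb"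
  moreover have "(0::'a) \<in> range emb" using emb_zero[OF alg] by (metis rangeI)
  ultimately show ?thesis using two_cases[of i] two_cases[of j] by auto
qed

lemma Yst_basic: "Yst 0 = mat 1" "k < 0 \<Longrightarrow> Yst k = 0"
proof -
  show "Yst 0 = mat 1" unfolding Yst_def uw.Us_base(1,2) vz.Us_base(1,2) mat2_one ..
  assume k: "k < 0"
  have "uw.Us k = 0" "uw.Ws k = 0" "vz.Us k = 0" "vz.Ws k = 0"
    using k by (rule uw.Us_base(3), rule uw.Us_base(4), rule vz.Us_base(3), rule vz.Us_base(4))
  then show "Yst k = 0" unfolding Yst_def mat2_zero by simp
qed

lemma sol_intro:
  assumes sh: "shape F D" and Y: "lmult F D = Yst"
  shows "formal_solution emb 3 AA F D Tst"
proof -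
  have Tz: "\<And>k. k < -3 \<or> k > 0 \<Longrightarrow> Tst k = 0" by (auto simp: Tst_def)
  have T3: "Tst (-3) = mat2 (-4) 0 0 4" and T2: "Tst (-2) = mat2 0 0 0 0"
    and T1: "Tst (-1) = mat2 (xx + 0) 0 0 (-xx + 0)" and T0: "Tst 0 = mat2 0 0 0 0"
    by (simp_all add: Tst_def mat2_zero)
  have E: "lderiv Yst n + lmult Yst (\<lambda>j. Tst (j - 1)) n = lmult AA Yst n" for n
  proof -
    have 1: "(\<lambda>k. Yst k $0$0) = uw.Us" "(\<lambda>k. Yst k $1$0) = uw.Ws"
      "(\<lambda>k. Yst k $1$1) = vz.Us" "(\<lambda>k. Yst k $0$1) = vz.Ws" by (simp_all add: Yst_def)
    have 2: "uw.Off uw.Us uw.Ws n = 0" "uw.Dg uw.Us uw.Ws n = 0" "vz.Off vz.Us vz.Ws n = 0" "vz.Dg vz.Us vz.Ws n = 0"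
      by (rule uw.Off_Us, rule uw.Dg_Us, rule vz.Off_Us, rule vz.Dg_Us)
    note EE = E_iff[where T=Tst and Y=Yst, OF T3 T2 T1 T0 Tz]
    show ?thesis
      apply (subst EE)
      apply (unfold 1 2 mult_zero_right add_0_right add_0_left minus_zero)
      apply simp_all
      done
  qed
  have diag: "is_diag (Tst k)" for k
  proof -
    have dz: "is_diag (0::('a,2) sqmat)" by (simp add: is_diag_def dp_zero)
    show ?thesis unfolding Tst_def using diag_mat2[of xx "-xx"] diag_mat2[of "-4" 4] dz by auto
  qed
  have m4: "- 4 \<in> range emb"
    using emb_uminus[OF alg, of 4] emb_numeral[OF alg, of "num.Bit0 (num.Bit0 num.One)"] by (metis rangeI numeral_Bit0 numeral_One)
  have p4: "4 \<in> range emb"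
    using emb_numeral[OF alg, of "num.Bit0 (num.Bit0 num.One)"] by (metis rangeI)
  have xr: "xx \<in> range emb" "- xx \<in> range emb" unfolding xx_def using emb_uminus[OF alg, of x]
    by (metis rangeI)+
  have rng: "Tst k $ i $ j \<in> range emb" for k i j
    unfolding Tst_def using range_mat2[OF m4 p4] range_mat2[OF xr] range_mat2[of 0 0] emb_zero[OF alg]
    by (auto simp: mat2_zero[symmetric] intro: rangeI)
  show ?thesis unfolding formal_solution_def Let_def Y
    using sh E diag rng Tz unfolding shape_def by auto
qed

end


theorem mainTheorem7:
  fixes emb :: "complex \<Rightarrow> 'a::division_ring"
    and f g a b :: 'a and x :: complex
  assumes alg: "complex_central_algebra emb"
    and comm: "b * a - a * b = 2 * b"
  defines "Acoef \<equiv> (\<lambda>j::int.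
      if j = -2 then mat2 (-4) 0 0 4
      else if j = -1 then mat2 0 (4 * f) (4 * f) 0
      else if j = 0 then
        mat2 (2 * f^2 + emb x) (- 2 * f^2 + 2 * g - emb x - emb (4/3) * b)
             (2 * f^2 - 2 * g + emb x + emb (4/3) * b) (- 2 * f^2 - emb x)
      else if j = 1 then
        smul ((g - emb (2/3) * b) * f - f * (g - emb (2/3) * b)) (mat2 1 (-1) (-1) 1)
        + smul (emb (4/3) * b * f + a - emb (1/2)) (mat2 0 1 1 0)
      else if j = 2 then
        smul (emb (2/3) * b * f^2 - emb (1/3) * b * g + emb (1/3) * emb x * b + emb (4/9) * b^2)
             (mat2 1 (-1) 1 (-1))
      else 0)"
  shows "(\<exists>!(F, D, T). formal_solution emb 3 Acoef F D T) \<and>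
         (\<forall>F D T. formal_solution emb 3 Acoef F D T \<longrightarrow>
            T (-3) = smul (-4) sigma3 \<and> T (-2) = 0 \<and> T (-1) = smul (emb x) sigma3 \<and> T 0 = 0)"
proof -
  interpret C: conc emb f g a b x by unfold_locales (rule alg)
  have AAe: "Acoef = C.AA" unfolding Acoef_def C.AA_def ..
  obtain F0 D0 where sh0: "shape F0 D0" and Y0: "lmult F0 D0 = C.Yst"
    using FD_exists[of C.Yst] C.Yst_basic by blast
  have fs0: "formal_solution emb 3 Acoef F0 D0 C.Tst" unfolding AAe by (rule C.sol_intro[OF sh0 Y0])
  have uniq: "F = F0 \<and> D = D0 \<and> T = C.Tst" if "formal_solution emb 3 Acoef F D T" for F D T
  proof -
    have fs: "formal_solution emb 3 C.AA F D T" using that AAe by simp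
    have sh: "shape F D" using fs unfolding formal_solution_def shape_def by auto
    have "T = C.Tst \<and> lmult F D = C.Yst" by (rule C.sol_imp[OF fs])
    then show ?thesis using shape_unique[OF sh sh0] Y0 by auto
  qed
  have part1: "\<exists>!(F, D, T). formal_solution emb 3 Acoef F D T"
  proof (rule ex1I[of _ "(F0, D0, C.Tst)"])
    show "case (F0, D0, C.Tst) of (F, D, T) \<Rightarrow> formal_solution emb 3 Acoef F D T" using fs0 by simp
  next
    fix y assume "case y of (F, D, T) \<Rightarrow> formal_solution emb 3 Acoef F D T"
    then show "y = (F0, D0, C.Tst)" using uniq by (cases y) auto
  qed
  have part2: "T (-3) = smul (-4) sigma3 \<and> T (-2) = 0 \<and> T (-1) = smul (emb x) sigma3 \<and> T 0 = 0"
    if "formal_solution emb 3 Acoef F D T" for F D T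
  proof -
    have "T = C.Tst" using uniq[OF that] by simp
    then show ?thesis by (simp add: C.Tst_def sigma3_def smul_mat2 C.xx_def)
  qed
  show ?thesis using part1 part2 by blast
qed

end
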